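(* For $n\ge1$ and $y>1$, $\sigma_n(y)=\delta_{2n}(2/y)$.
   Context: $\mathcal{F}_n$ is the set of real trigonometric polynomials of order at most $n$; $\mathbb{T}=[0,2\pi)$ with endpoints identified, with Lebesgue measure $\mathrm{mes}$; $\mu(f)=\mathrm{mes}\{t\in\mathbb{T}:|f(t)|\ge1\}$; $\mathcal{F}_n(y)=\{y\cos nt+f_{n-1}:f_{n-1}\in\mathcal{F}_{n-1}\}$; $\sigma_n(y)=\inf\{\mu(f):f\in\mathcal{F}_n(y)\}$. $\mathfrak{P}_m(\Gamma)$ is the set of monic algebraic polynomials of degree $m$ all of whose zeros lie on the unit circle $\Gamma$, and for $0\le h\le2$, $\delta_m(h)=\inf\{\mathrm{mes}\{t\in\mathbb{T}:|P(e^{it})|\ge h\}:P\in\mathfrak{P}_m(\Gamma)\}$. *)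

theory Defs
  imports "HOL-Analysis.Analysis" "HOL-Computational_Algebra.Polynomial"
begin

definition trig_poly :: "nat \<Rightarrow> (real \<Rightarrow> real) \<Rightarrow> bool" where
  "trig_poly n f \<longleftrightarrow> (\<exists>a b :: nat \<Rightarrow> real.
      f = (\<lambda>t. \<Sum>k\<le>n. a k * cos (real k * t) + b k * sin (real k * t)))"

definition mu :: "(real \<Rightarrow> real) \<Rightarrow> real" where
  "mu f = measure lborel {t \<in> {0..<2*pi}. \<bar>f t\<bar> \<ge> 1}"

definition F_y :: "nat \<Rightarrow> real \<Rightarrow> (real \<Rightarrow> real) set" where
  "F_y n y = {f. \<exists>g. trig_poly (n - 1) g \<and> f = (\<lambda>t. y * cos (real n * t) + g t)}"

definition sigma :: "nat \<Rightarrow> real \<Rightarrow> real" where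
  "sigma n y = Inf (mu ` F_y n y)"

definition unimodular_monic :: "nat \<Rightarrow> complex poly set" where
  "unimodular_monic m = {p. degree p = m \<and> lead_coeff p = 1 \<and>
      (\<forall>z. poly p z = 0 \<longrightarrow> cmod z = 1)}"

definition delta :: "nat \<Rightarrow> real \<Rightarrow> real" where
  "delta m h = Inf ((\<lambda>p. measure lborel {t \<in> {0..<2*pi}. cmod (poly p (cis t)) \<ge> h})
                     ` unimodular_monic m)"

end

theory Submission
  imports Defs "HOL-Computational_Algebra.Fundamental_Theorem_Algebra"
begin


lemma trig_poly_zero: "trig_poly m (\<lambda>t. 0)"
  unfolding trig_poly_def by (rule exI[of _ "\<lambda>_. 0"], rule exI[of _ "\<lambda>_. 0"]) simp

lemma trig_poly_add:
  assumes "trig_poly m f" "trig_poly m g" shows "trig_poly m (\<lambda>t. f t + g t)"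
proof -
  obtain a b where f: "f = (\<lambda>t. \<Sum>k\<le>m. a k * cos (real k * t) + b k * sin (real k * t))"
    using assms(1) unfolding trig_poly_def by blast
  obtain c d where g: "g = (\<lambda>t. \<Sum>k\<le>m. c k * cos (real k * t) + d k * sin (real k * t))"
    using assms(2) unfolding trig_poly_def by blast
  show ?thesis unfolding trig_poly_def
    by (rule exI[of _ "\<lambda>k. a k + c k"], rule exI[of _ "\<lambda>k. b k + d k"])
       (simp add: f g sum.distrib[symmetric] algebra_simps)
qed

lemma trig_poly_scale:
  assumes "trig_poly m f" shows "trig_poly m (\<lambda>t. c * f t)"
proof -
  obtain a b where f: "f = (\<lambda>t. \<Sum>k\<le>m. a k * cos (real k * t) + b k * sin (real k * t))"
    using assms(1) unfolding trig_poly_def by blast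
  show ?thesis unfolding trig_poly_def
    by (rule exI[of _ "\<lambda>k. c * a k"], rule exI[of _ "\<lambda>k. c * b k"])
       (simp add: f sum_distrib_left algebra_simps)
qed

lemma trig_poly_sum:
  assumes "finite A" "\<And>i. i \<in> A \<Longrightarrow> trig_poly m (f i)"
  shows "trig_poly m (\<lambda>t. \<Sum>i\<in>A. f i t)"
  using assms
proof (induction A rule: finite_induct)
  case empty then show ?case using trig_poly_zero by simp
next
  case (insert x F)
  then show ?case using trig_poly_add[of m "f x" "\<lambda>t. \<Sum>i\<in>F. f i t"] by simp
qed

lemma trig_poly_mono:
  assumes "k \<le> m" shows "trig_poly m (\<lambda>t. A * cos (real k * t) + B * sin (real k * t))"
  unfolding trig_poly_def
  by (rule exI[of _ "\<lambda>i. if i = k then A else 0"], rule exI[of _ "\<lambda>i. if i = k then B else 0"])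
     (simp add: if_distrib[of "\<lambda>x. x * _"] sum.distrib sum.delta assms cong: if_cong)

lemma trig_poly_Re_cis:
  fixes j :: int and d :: complex
  assumes "\<bar>j\<bar> \<le> int m"
  shows "trig_poly m (\<lambda>s. Re (d * cis (of_int j * (s + a))))"
proof -
  define e where "e = d * cis (of_int j * a)"
  have eq: "Re (d * cis (of_int j * (s + a))) = Re (e * cis (of_int j * s))" for s
    unfolding e_def by (simp add: mult.assoc cis_mult algebra_simps)
  show ?thesis
  proof (cases "j \<ge> 0")
    case True
    have "Re (e * cis (of_int j * s)) = Re e * cos (real (nat j) * s) + (- Im e) * sin (real (nat j) * s)" for s
      using True by (simp add: cis.sel)
    then have "(\<lambda>s. Re (d * cis (of_int j * (s + a)))) = (\<lambda>s. Re e * cos (real (nat j) * s) + (- Im e) * sin (real (nat j) * s))"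
      using eq by presburger
    then show ?thesis using trig_poly_mono[of "nat j" m "Re e" "- Im e"] assms True
      by simp
  next
    case False
    have "Re (e * cis (of_int j * s)) = Re e * cos (real (nat (-j)) * s) + (Im e) * sin (real (nat (-j)) * s)" for s
      using False by (simp add: cis.sel)
    then have "(\<lambda>s. Re (d * cis (of_int j * (s + a)))) = (\<lambda>s. Re e * cos (real (nat (-j)) * s) + (Im e) * sin (real (nat (-j)) * s))"
      using eq by presburger
    then show ?thesis using trig_poly_mono[of "nat (-j)" m "Re e" "Im e"] assms False
      by simp
  qed
qed

lemma trig_poly_cont:
  assumes "trig_poly m f" shows "continuous_on UNIV f"
proof -
  obtain a b where f: "f = (\<lambda>t. \<Sum>k\<le>m. a k * cos (real k * t) + b k * sin (real k * t))"
    using assms(1) unfolding trig_poly_def by blast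
  show ?thesis unfolding f by (intro continuous_intros)
qed




lemma measure_lborel_preimage_plus:
  assumes "A \<in> sets borel"
  shows "measure lborel ((\<lambda>x::real. x + c) -` A) = measure lborel A"
proof -
  have "measure lborel A = measure (distr lborel borel ((+) c)) A"
    by (simp add: lborel_distr_plus)
  also have "\<dots> = measure lborel ((+) c -` A \<inter> space lborel)"
    by (rule measure_distr) (use assms in auto)
  also have "(+) c -` A \<inter> space lborel = (\<lambda>x::real. x + c) -` A" by (auto simp: add.commute)
  finally show ?thesis by simp
qed

lemma fin_Ico: "emeasure lborel ({t \<in> {a..<b::real}. P t}) \<noteq> \<infinity>"
proof -
  have "bounded ({t \<in> {a..<b::real}. P t})"
    by (rule bounded_subset[OF bounded_closed_interval[of a b]]) auto
  then show ?thesis using emeasure_bounded_finite by fastforce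
qed

lemma periodic_shift_measure:
  fixes Q :: "real \<Rightarrow> bool"
  assumes per: "\<And>x k. Q (x + 2*pi * of_int k) = Q x"
    and meas: "{x. Q x} \<in> sets borel"
  shows "measure lborel {t \<in> {0..<2*pi}. Q (t + c)} = measure lborel {t \<in> {0..<2*pi}. Q t}"
proof -
  define m where "m a = measure lborel {t \<in> {a..<a+2*pi}. Q t}" for a
  have mb: "{t \<in> {a..<b}. Q t} \<in> sets borel" for a b
  proof -
    have "{t \<in> {a..<b}. Q t} = {a..<b} \<inter> {x. Q x}" by auto
    then show ?thesis using meas by simp
  qed
  have shift: "measure lborel {t \<in> {a..<b}. Q (t + d)} = measure lborel {t \<in> {a+d..<b+d}. Q t}" for a b d
  proof -
    have "{t \<in> {a..<b}. Q (t + d)} = (\<lambda>x. x + d) -` {t \<in> {a+d..<b+d}. Q t}" by auto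
    then show ?thesis using measure_lborel_preimage_plus[OF mb[of "a+d" "b+d"], of d] by simp
  qed
  have split: "measure lborel {t \<in> {a..<c}. Q t} = measure lborel {t \<in> {a..<b}. Q t} + measure lborel {t \<in> {b..<c}. Q t}"
    if "a \<le> b" "b \<le> c" for a b c
  proof -
    have "{t \<in> {a..<c}. Q t} = {t \<in> {a..<b}. Q t} \<union> {t \<in> {b..<c}. Q t}" using that by auto
    moreover have "{t \<in> {a..<b}. Q t} \<inter> {t \<in> {b..<c}. Q t} = {}" by auto
    ultimately show ?thesis
      using measure_Union[of lborel "{t \<in> {a..<b}. Q t}" "{t \<in> {b..<c}. Q t}"] fin_Ico mb by simp
  qed
  have m0: "m a = m 0" if "0 \<le> a" "a \<le> 2*pi" for a
  proof -
    have "m a = measure lborel {t \<in> {a..<2*pi}. Q t} + measure lborel {t \<in> {2*pi..<a+2*pi}. Q t}"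
      unfolding m_def using that by (intro split) auto
    also have "measure lborel {t \<in> {2*pi..<a+2*pi}. Q t} = measure lborel {t \<in> {0..<a}. Q t}"
    proof -
      have "measure lborel {t \<in> {0..<a}. Q t} = measure lborel {t \<in> {0..<a}. Q (t + 2*pi)}"
        using per[of _ 1] by simp
      also have "\<dots> = measure lborel {t \<in> {2*pi..<a+2*pi}. Q t}" by (subst shift) simp
      finally show ?thesis by simp
    qed
    also have "measure lborel {t \<in> {a..<2*pi}. Q t} + measure lborel {t \<in> {0..<a}. Q t} = m 0"
      unfolding m_def using that split[of 0 a "2*pi"] by simp
    finally show ?thesis .
  qed
  define k where "k = \<lfloor>c / (2*pi)\<rfloor>"
  define a where "a = c - 2*pi * of_int k"
  have a1: "0 \<le> a" unfolding a_def k_def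
    using floor_divide_lower[of "2*pi" c] by (simp add: algebra_simps)
  have a2: "a \<le> 2*pi" unfolding a_def k_def
    using floor_divide_upper[of "2*pi" c] by (simp add: algebra_simps)
  have "measure lborel {t \<in> {0..<2*pi}. Q (t + c)} = measure lborel {t \<in> {0..<2*pi}. Q (t + a)}"
  proof -
    have "Q (t + c) = Q (t + a)" for t
      using per[of "t + a" k] unfolding a_def by (simp add: algebra_simps)
    then show ?thesis by simp
  qed
  also have "\<dots> = m a" unfolding m_def by (subst shift) (simp add: add.commute)
  also have "\<dots> = m 0" by (rule m0[OF a1 a2])
  finally show ?thesis unfolding m_def by simp
qed




lemma factor_ineq:
  fixes w x :: complex
  assumes w: "cmod w = 1" and x: "x \<noteq> 0"
  shows "cmod (w - sgn x) * sqrt (cmod x) \<le> cmod (w - x)"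
proof -
  define a where "a = Re w" define b where "b = Im w"
  define p where "p = Re x" define q where "q = Im x"
  define r where "r = cmod x"
  have r0: "r > 0" using x unfolding r_def by simp
  have ab: "a^2 + b^2 = 1" using w unfolding a_def b_def cmod_def by simp
  have pq: "p^2 + q^2 = r^2" unfolding p_def q_def r_def cmod_def by simp
  have sg: "sgn x = Complex (p / r) (q / r)"
    unfolding p_def q_def r_def by (simp add: sgn_div_norm complex_eq_iff field_simps)
  have L: "(cmod (w - sgn x))^2 * r = 2*r - 2*(a*p+b*q)"
  proof -
    have "(cmod (w - sgn x))^2 = (a - p/r)^2 + (b - q/r)^2"
      unfolding sg a_def b_def by (simp add: cmod_power2)
    also have "\<dots> = (a^2+b^2) - 2*(a*p+b*q)/r + (p^2+q^2)/r^2"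
      using r0 by (simp add: power2_eq_square field_simps)
    also have "\<dots> = 2 - 2*(a*p+b*q)/r" using ab pq r0 by simp
    finally show ?thesis using r0 by (simp add: field_simps)
  qed
  have R: "(cmod (w - x))^2 = 1 - 2*(a*p+b*q) + r^2"
  proof -
    have "(cmod (w - x))^2 = (a - p)^2 + (b - q)^2"
      unfolding a_def b_def p_def q_def by (simp add: cmod_power2)
    also have "\<dots> = (a^2+b^2) - 2*(a*p+b*q) + (p^2+q^2)"
      by (simp add: power2_eq_square field_simps)
    finally show ?thesis using ab pq by simp
  qed
  have "(cmod (w - sgn x))^2 * r \<le> (cmod (w - x))^2"
  proof -
    have "(1 - r)^2 = 1 - 2*r + r^2" by (simp add: power2_eq_square algebra_simps)
    moreover have "(1 - r)^2 \<ge> 0" by simp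
    ultimately show ?thesis using L R by linarith
  qed
  then have "sqrt ((cmod (w - sgn x))^2 * r) \<le> sqrt ((cmod (w - x))^2)"
    by (rule real_sqrt_le_mono)
  then show ?thesis unfolding r_def by (simp add: real_sqrt_mult)
qed

lemma proj_mset:
  fixes M :: "complex multiset"
  assumes "\<forall>x\<in>#M. x \<noteq> 0"
  defines "P \<equiv> (\<Prod>x\<in>#M. [:- sgn x, 1:])" and "Q \<equiv> (\<Prod>x\<in>#M. [:- x, 1:])"
  shows "degree P = size M \<and> lead_coeff P = 1 \<and> (\<forall>z. poly P z = 0 \<longrightarrow> cmod z = 1) \<and>
         (\<forall>w. cmod w = 1 \<longrightarrow> cmod (poly P w) * sqrt (cmod (poly Q 0)) \<le> cmod (poly Q w))"
  using assms(1) unfolding P_def Q_def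
proof (induction M)
  case empty
  then show ?case by simp
next
  case (add x M)
  define P where "P = (\<Prod>x\<in>#M. [:- sgn x, 1:])"
  define Q where "Q = (\<Prod>x\<in>#M. [:- x, 1:])"
  have IH: "degree P = size M \<and> lead_coeff P = 1 \<and> (\<forall>z. poly P z = 0 \<longrightarrow> cmod z = 1) \<and>
         (\<forall>w. cmod w = 1 \<longrightarrow> cmod (poly P w) * sqrt (cmod (poly Q 0)) \<le> cmod (poly Q w))"
    unfolding P_def Q_def by (rule add.IH) (use add.prems in simp)
  have x0: "x \<noteq> 0" using add by simp
  have P0: "P \<noteq> 0" using IH by auto
  have "degree ([:- sgn x, 1:] * P) = Suc (size M)"
    using IH P0 by (subst degree_mult_eq) auto
  moreover have "lead_coeff ([:- sgn x, 1:] * P) = 1"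
  proof -
    have lcP: "lead_coeff P = 1" using IH by blast
    show ?thesis using lead_coeff_mult[of "[:- sgn x, 1:]" P] lcP by simp
  qed
  moreover have "\<forall>z. poly ([:- sgn x, 1:] * P) z = 0 \<longrightarrow> cmod z = 1"
    using IH x0 by (auto simp: norm_sgn)
  moreover have "cmod (poly ([:- sgn x, 1:] * P) w) * sqrt (cmod (poly ([:- x, 1:] * Q) 0))
       \<le> cmod (poly ([:- x, 1:] * Q) w)" if w: "cmod w = 1" for w
  proof -
    have "cmod (poly ([:- sgn x, 1:] * P) w) * sqrt (cmod (poly ([:- x, 1:] * Q) 0))
        = (cmod (w - sgn x) * sqrt (cmod x)) * (cmod (poly P w) * sqrt (cmod (poly Q 0)))"
    proof -
      have e1: "poly ([:- sgn x, 1:] * P) w = (w - sgn x) * poly P w" by (simp add: algebra_simps)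
      have e2: "poly ([:- x, 1:] * Q) 0 = (- x) * poly Q 0" by simp
      show ?thesis unfolding e1 e2 norm_mult real_sqrt_mult norm_minus_cancel by (simp add: mult_ac)
    qed
    also have "\<dots> \<le> cmod (w - x) * cmod (poly Q w)"
      using factor_ineq[OF w x0] IH w by (intro mult_mono) auto
    also have "\<dots> = cmod (poly ([:- x, 1:] * Q) w)"
    proof -
      have e3: "poly ([:- x, 1:] * Q) w = (w - x) * poly Q w" by (simp add: algebra_simps)
      show ?thesis unfolding e3 norm_mult ..
    qed
    finally show ?thesis .
  qed
  ultimately show ?case unfolding P_def Q_def by simp
qed

lemma project_roots:
  fixes Q :: "complex poly"
  assumes lc: "lead_coeff Q = 1" and c0: "cmod (poly Q 0) = 1"
  shows "\<exists>P \<in> unimodular_monic (degree Q). \<forall>w. cmod w = 1 \<longrightarrow> cmod (poly P w) \<le> cmod (poly Q w)"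
proof -
  define M where "M = proots Q"
  have Qd: "Q = (\<Prod>x\<in>#M. [:- x, 1:])"
    using complex_poly_decompose_multiset[of Q] lc unfolding M_def by simp
  have nz: "\<forall>x\<in>#M. x \<noteq> 0"
  proof
    fix x assume "x \<in># M"
    moreover have "Q \<noteq> 0" using lc by auto
    ultimately have "poly Q x = 0" unfolding M_def by simp
    then show "x \<noteq> 0" using c0 by auto
  qed
  have sz: "size M = degree Q" unfolding M_def by (rule size_proots_complex)
  define P where "P = (\<Prod>x\<in>#M. [:- sgn x, 1:])"
  have pm: "degree P = size M \<and> lead_coeff P = 1 \<and> (\<forall>z. poly P z = 0 \<longrightarrow> cmod z = 1) \<and>
         (\<forall>w. cmod w = 1 \<longrightarrow> cmod (poly P w) * sqrt (cmod (poly Q 0)) \<le> cmod (poly Q w))"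
    unfolding P_def Qd by (rule proj_mset[OF nz])
  have "P \<in> unimodular_monic (degree Q)"
  proof -
    have d: "degree P = degree Q" using pm sz by simp
    have l: "lead_coeff P = 1" using pm by blast
    have r: "\<forall>z. poly P z = 0 \<longrightarrow> cmod z = 1" using pm by blast
    show ?thesis unfolding unimodular_monic_def mem_Collect_eq using d l r by blast
  qed
  moreover have "\<forall>w. cmod w = 1 \<longrightarrow> cmod (poly P w) \<le> cmod (poly Q w)"
    using pm c0 by simp
  ultimately show ?thesis by blast
qed




lemma poly_of_trig:
  assumes n: "n \<ge> 1" and y: "y > 0" and g: "trig_poly (n-1) g"
  shows "\<exists>Q::complex poly. degree Q = 2*n \<and> lead_coeff Q = 1 \<and> poly Q 0 = 1 \<and>
           (\<forall>t. cmod (poly Q (cis t)) = (2/y) * \<bar>y * cos (real n * t) + g t\<bar>)"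
proof -
  obtain a b where gd: "g = (\<lambda>t. \<Sum>k\<le>n-1. a k * cos (real k * t) + b k * sin (real k * t))"
    using g unfolding trig_poly_def by blast
  obtain m where m: "n = Suc m" using n by (cases n) auto
  define A where "A = a(n := y)"
  define B where "B = b(n := 0)"
  have fsum: "y * cos (real n * t) + g t = (\<Sum>k\<le>n. A k * cos (real k * t) + B k * sin (real k * t))" for t
  proof -
    have "(\<Sum>k\<le>n. A k * cos (real k * t) + B k * sin (real k * t))
        = (\<Sum>k\<le>m. A k * cos (real k * t) + B k * sin (real k * t)) + (A n * cos (real n * t) + B n * sin (real n * t))"
      unfolding m by (rule sum.atMost_Suc)
    also have "(\<Sum>k\<le>m. A k * cos (real k * t) + B k * sin (real k * t)) = g t"
      unfolding gd m A_def B_def by (intro sum.cong) auto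
    finally show ?thesis unfolding A_def B_def by simp
  qed
  define c where "c k = (complex_of_real (A k) - \<i> * complex_of_real (B k)) / 2" for k
  define d where "d k = (complex_of_real (A k) + \<i> * complex_of_real (B k)) / 2" for k
  define Q0 where "Q0 = (\<Sum>k\<le>n. monom (c k) (n+k) + monom (d k) (n-k))"
  have cQ0: "coeff Q0 j = (\<Sum>k\<le>n. (if n+k = j then c k else 0) + (if n-k = j then d k else 0))" for j
    unfolding Q0_def by (simp add: coeff_sum coeff_monom)
  have topc: "coeff Q0 (2*n) = complex_of_real y / 2"
  proof -
    have "coeff Q0 (2*n) = (\<Sum>k\<le>n. if k = n then c k else 0)"
      unfolding cQ0 using n by (intro sum.cong) auto
    also have "\<dots> = c n" by simp
    finally show ?thesis unfolding c_def A_def B_def by simp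
  qed
  have bot: "coeff Q0 0 = complex_of_real y / 2"
  proof -
    have "coeff Q0 0 = (\<Sum>k\<le>n. if k = n then d k else 0)"
      unfolding cQ0 using n by (intro sum.cong) auto
    also have "\<dots> = d n" by simp
    finally show ?thesis unfolding d_def A_def B_def by simp
  qed
  have degQ0: "degree Q0 = 2*n"
  proof (rule antisym)
    show "degree Q0 \<le> 2*n"
    proof (rule degree_le, intro allI impI)
      fix j assume "2*n < j"
      then show "coeff Q0 j = 0" unfolding cQ0 by (intro sum.neutral) auto
    qed
    have "coeff Q0 (2*n) \<noteq> 0" unfolding topc using y by simp
    then show "2*n \<le> degree Q0" by (rule le_degree)
  qed
  have pQ0: "poly Q0 (cis t) = cis t ^ n * complex_of_real (y * cos (real n * t) + g t)" for t
  proof -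
    have trm: "c k * cis t ^ (n+k) + d k * cis t ^ (n-k)
        = cis t ^ n * complex_of_real (A k * cos (real k * t) + B k * sin (real k * t))" if k: "k \<le> n" for k
    proof -
      define w where "w = cis t ^ k"
      have w1: "w * cnj w = 1" unfolding w_def
        by (simp add: power_mult_distrib[symmetric] cis_cnj cis_mult)
      have e1: "cis t ^ (n+k) = cis t ^ n * w" unfolding w_def by (simp add: power_add)
      have "cis t ^ n = cis t ^ (n-k) * w" unfolding w_def using k by (simp add: power_add[symmetric])
      then have e2: "cis t ^ (n-k) = cis t ^ n * cnj w"
        using w1 by (metis mult.assoc mult.right_neutral)
      have e3: "c k * w + d k * cnj w = complex_of_real (A k * cos (real k * t) + B k * sin (real k * t))"
      proof -
        have "w = cis (real k * t)" unfolding w_def by (rule Complex.DeMoivre)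
        then show ?thesis unfolding c_def d_def cis_cnj
          by (simp add: complex_eq_iff field_simps)
      qed
      show ?thesis unfolding e1 e2 e3[symmetric] by (simp add: algebra_simps)
    qed
    have "poly Q0 (cis t) = (\<Sum>k\<le>n. c k * cis t ^ (n+k) + d k * cis t ^ (n-k))"
      unfolding Q0_def by (simp add: poly_sum poly_monom)
    also have "\<dots> = (\<Sum>k\<le>n. cis t ^ n * complex_of_real (A k * cos (real k * t) + B k * sin (real k * t)))"
      by (intro sum.cong refl trm) simp
    also have "\<dots> = cis t ^ n * complex_of_real (y * cos (real n * t) + g t)"
      unfolding fsum by (simp add: sum_distrib_left)
    finally show ?thesis .
  qed
  define Q where "Q = smult (complex_of_real (2/y)) Q0"
  have "degree Q = 2*n" unfolding Q_def using y degQ0 by simp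
  moreover have "lead_coeff Q = 1" unfolding Q_def using y degQ0 topc by (simp add: mult.commute)
  moreover have "poly Q 0 = 1" unfolding Q_def using y bot by (simp add: poly_0_coeff_0 mult.commute)
  moreover have "cmod (poly Q (cis t)) = (2/y) * \<bar>y * cos (real n * t) + g t\<bar>" for t
  proof -
    have "poly Q (cis t) = complex_of_real (2/y) * (cis t ^ n * complex_of_real (y * cos (real n * t) + g t))"
      unfolding Q_def by (simp only: poly_smult pQ0)
    then show ?thesis using y by (simp only: norm_mult norm_power norm_cis norm_of_real) simp
  qed
  ultimately show ?thesis by blast
qed




lemma half_factor:
  fixes x :: complex
  assumes x: "cmod x = 1"
  defines "s \<equiv> cis (Arg x / 2)"
  shows "(\<i> * s)^2 = - x" "Im (cnj (\<i> * s) * cis (- (t / 2)) * (cis t - x)) = 0"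
proof -
  have x0: "x \<noteq> 0" using x by auto
  have s2: "s^2 = x"
  proof -
    have "s^2 = cis (real 2 * (Arg x / 2))" unfolding s_def by (rule Complex.DeMoivre)
    also have "\<dots> = cis (Arg x)" by simp
    also have "\<dots> = x" using cis_Arg[OF x0] x by (simp add: sgn_div_norm)
    finally show ?thesis .
  qed
  then show "(\<i> * s)^2 = - x" by (simp add: power_mult_distrib)
  define w where "w = cis (t / 2)"
  have ww: "cnj w * w = 1" unfolding w_def by (simp add: cis_cnj cis_mult)
  have ss: "cnj s * s = 1" unfolding s_def by (simp add: cis_cnj cis_mult)
  have ct: "cis t = w^2" unfolding w_def by (simp add: Complex.DeMoivre)
  have cm: "cis (- (t / 2)) = cnj w" unfolding w_def by (simp add: cis_cnj)
  define z where "z = cnj s * w"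
  have "cnj (\<i> * s) * cis (- (t / 2)) * (cis t - x) = - \<i> * (cnj s * cnj w * w^2 - cnj s * cnj w * s^2)"
    unfolding cm ct s2[symmetric] by (simp add: algebra_simps)
  also have "cnj s * cnj w * w^2 = z" unfolding z_def power2_eq_square
    using ww by (metis mult.assoc mult.commute mult.left_neutral)
  also have "cnj s * cnj w * s^2 = cnj z" unfolding z_def power2_eq_square
    using ss by (simp add: algebra_simps)
  finally have F: "cnj (\<i> * s) * cis (- (t / 2)) * (cis t - x) = - \<i> * (z - cnj z)" .
  show "Im (cnj (\<i> * s) * cis (- (t / 2)) * (cis t - x)) = 0" unfolding F by simp
qed

lemma half_mset:
  fixes M :: "complex multiset"
  assumes "\<forall>x\<in>#M. cmod x = 1"
  shows "cmod (\<Prod>x\<in>#M. \<i> * cis (Arg x / 2)) = 1 \<and> (\<Prod>x\<in>#M. \<i> * cis (Arg x / 2))^2 = (\<Prod>x\<in>#M. - x) \<and>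
    (\<forall>t. Im (cnj (\<Prod>x\<in>#M. \<i> * cis (Arg x / 2)) * cis (- (real (size M) * t / 2)) * (\<Prod>x\<in>#M. cis t - x)) = 0)"
  using assms
proof (induction M)
  case empty
  then show ?case by simp
next
  case (add x M)
  define L where "L = (\<Prod>x\<in>#M. \<i> * cis (Arg x / 2))"
  define s where "s = cis (Arg x / 2)"
  have IH: "cmod L = 1 \<and> L^2 = (\<Prod>x\<in>#M. - x) \<and>
    (\<forall>t. Im (cnj L * cis (- (real (size M) * t / 2)) * (\<Prod>x\<in>#M. cis t - x)) = 0)"
    unfolding L_def by (rule add.IH) (use add.prems in simp)
  have x: "cmod x = 1" using add.prems by simp
  note hf = half_factor[OF x, folded s_def]
  have "cmod (\<i> * s * L) = 1" using IH unfolding s_def by (simp add: norm_mult)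
  moreover have "(\<i> * s * L)^2 = - x * (\<Prod>x\<in>#M. - x)" using IH hf(1) by (simp add: power_mult_distrib)
  moreover have "Im (cnj (\<i> * s * L) * cis (- (real (Suc (size M)) * t / 2)) * ((cis t - x) * (\<Prod>x\<in>#M. cis t - x))) = 0" for t
  proof -
    have eq0: "cis (- (real (Suc (size M)) * t / 2)) = cis (- (t/2)) * cis (- (real (size M) * t / 2))"
      by (simp add: cis_mult algebra_simps add_divide_distrib)
    define a where "a = cnj (\<i> * s) * cis (- (t / 2)) * (cis t - x)"
    define b where "b = cnj L * cis (- (real (size M) * t / 2)) * (\<Prod>x\<in>#M. cis t - x)"
    have "cnj (\<i> * s * L) * cis (- (real (Suc (size M)) * t / 2)) * ((cis t - x) * (\<Prod>x\<in>#M. cis t - x))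
      = a * b" unfolding a_def b_def eq0 complex_cnj_mult by (simp only: mult_ac)
    moreover have "Im a = 0" unfolding a_def by (rule hf(2))
    moreover have "Im b = 0" unfolding b_def using IH by blast
    ultimately show ?thesis by simp
  qed
  ultimately show ?case unfolding L_def s_def by (simp add: mult_ac)
qed




lemma from_poly:
  assumes n: "n \<ge> 1" and y: "y > 0" and P: "P \<in> unimodular_monic (2*n)"
  shows "\<exists>f\<in>F_y n y. mu f = measure lborel {t \<in> {0..<2*pi}. cmod (poly P (cis t)) \<ge> 2/y}"
proof -
  have dP: "degree P = 2*n" and lP: "lead_coeff P = 1" and rP: "\<forall>z. poly P z = 0 \<longrightarrow> cmod z = 1"
    using P unfolding unimodular_monic_def by auto
  define M where "M = proots P"
  have P0: "P \<noteq> 0" using lP by auto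
  have Pd: "P = (\<Prod>x\<in>#M. [:- x, 1:])"
    using complex_poly_decompose_multiset[of P] lP unfolding M_def by simp
  have sz: "size M = 2*n" unfolding M_def using size_proots_complex[of P] dP by simp
  have un: "\<forall>x\<in>#M. cmod x = 1" using rP P0 unfolding M_def by simp
  define L where "L = (\<Prod>x\<in>#M. \<i> * cis (Arg x / 2))"
  have hL: "cmod L = 1 \<and> L^2 = (\<Prod>x\<in>#M. - x) \<and>
    (\<forall>t. Im (cnj L * cis (- (real (size M) * t / 2)) * (\<Prod>x\<in>#M. cis t - x)) = 0)"
    unfolding L_def by (rule half_mset[OF un])
  have pPc: "poly P z = (\<Prod>x\<in>#M. z - x)" for z
    by (subst Pd) (simp add: poly_prod_mset)
  have L1: "cmod L = 1" using hL by blast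
  have L2: "L^2 = poly P 0" using hL pPc[of 0] by simp
  have L0: "L \<noteq> 0" using L1 by auto
  define R where "R t = cnj L * cis (- (real n * t)) * poly P (cis t)" for t
  have ImR: "Im (R t) = 0" for t
  proof -
    have "real (size M) * t / 2 = real n * t" using sz by simp
    then show ?thesis using hL unfolding R_def pPc by metis
  qed
  have cR: "cmod (R t) = cmod (poly P (cis t))" for t
    unfolding R_def using L1 by (simp add: norm_mult)
  define e where "e k = cnj L * coeff P k" for k
  have Rsum: "R t = (\<Sum>k\<le>2*n. e k * cis ((real k - real n) * t))" for t
  proof -
    have "R t = (\<Sum>k\<le>2*n. cnj L * cis (- (real n * t)) * (coeff P k * cis t ^ k))"
      unfolding R_def poly_altdef dP by (simp add: sum_distrib_left)
    also have "\<dots> = (\<Sum>k\<le>2*n. e k * cis ((real k - real n) * t))"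
    proof (intro sum.cong refl)
      fix k
      have "cis t ^ k = cis (real k * t)" by (rule Complex.DeMoivre)
      then have "cis (- (real n * t)) * cis t ^ k = cis ((real k - real n) * t)"
        by (simp add: cis_mult algebra_simps)
      then show "cnj L * cis (- (real n * t)) * (coeff P k * cis t ^ k) = e k * cis ((real k - real n) * t)"
        unfolding e_def by (metis mult.assoc mult.left_commute)
    qed
    finally show ?thesis .
  qed
  define \<beta> where "\<beta> = Arg L"
  have Lc: "L = cis \<beta>" unfolding \<beta>_def using cis_Arg[OF L0] L1 by (simp add: sgn_div_norm)
  have e2n: "e (2*n) = cnj L" unfolding e_def using lP dP by simp
  have e0: "e 0 = L"
  proof -
    have "coeff P 0 = L^2" using L2 by (simp add: poly_0_coeff_0)
    moreover have "cnj L * L = 1" using L1 complex_norm_square[of L] by (simp add: mult.commute)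
    ultimately show ?thesis unfolding e_def power2_eq_square by (metis mult.assoc mult.left_neutral)
  qed
  define G where "G t = (\<Sum>k\<in>{1..<2*n}. Re (e k * cis ((real k - real n) * t)))" for t
  have ReR: "Re (R t) = 2 * cos (real n * t - \<beta>) + G t" for t
  proof -
    have set: "{..2*n} = insert 0 (insert (2*n) {1..<2*n})" using n by auto
    have "Re (R t) = (\<Sum>k\<le>2*n. Re (e k * cis ((real k - real n) * t)))"
      unfolding Rsum by (simp add: Re_sum)
    also have "\<dots> = Re (e 0 * cis ((real 0 - real n) * t)) + Re (e (2*n) * cis ((real (2*n) - real n) * t)) + G t"
      unfolding set G_def using n by (simp add: add.assoc)
    also have "Re (e 0 * cis ((real 0 - real n) * t)) = cos (real n * t - \<beta>)"
      unfolding e0 Lc by (simp add: cis_mult) (metis cos_minus minus_diff_eq)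
    also have "Re (e (2*n) * cis ((real (2*n) - real n) * t)) = cos (real n * t - \<beta>)"
      unfolding e2n Lc by (simp add: cis_cnj cis_mult)
    finally show ?thesis by simp
  qed
  define a where "a = \<beta> / real n"
  have na: "real n * a = \<beta>" unfolding a_def using n by simp
  define gg where "gg s = y / 2 * G (s + a)" for s
  define f where "f s = y * cos (real n * s) + gg s" for s
  have fR: "f s = y / 2 * Re (R (s + a))" for s
    unfolding f_def gg_def ReR using na by (simp add: algebra_simps)
  have tg: "trig_poly (n-1) gg"
  proof -
    have eqg: "gg = (\<lambda>s. y / 2 * (\<Sum>k\<in>{1..<2*n}. Re (e k * cis (of_int (int k - int n) * (s + a)))))"
      unfolding gg_def G_def by (simp add: of_nat_diff)
    have "trig_poly (n-1) (\<lambda>s. y / 2 * (\<Sum>k\<in>{1..<2*n}. Re (e k * cis (of_int (int k - int n) * (s + a)))))"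
    proof (intro trig_poly_scale trig_poly_sum)
      fix k assume "k \<in> {1..<2*n}"
      then have "\<bar>int k - int n\<bar> \<le> int (n-1)" by auto
      then show "trig_poly (n - 1) (\<lambda>s. Re (e k * cis (of_int (int k - int n) * (s + a))))"
        by (rule trig_poly_Re_cis)
    qed simp
    then show ?thesis unfolding eqg .
  qed
  have fF: "f \<in> F_y n y" unfolding F_y_def using tg by (auto simp: f_def[abs_def])
  have "{t \<in> {0..<2*pi}. \<bar>f t\<bar> \<ge> 1} = {t \<in> {0..<2*pi}. 2/y \<le> cmod (poly P (cis (t + a)))}"
  proof -
    have "\<bar>f t\<bar> \<ge> 1 \<longleftrightarrow> 2/y \<le> cmod (poly P (cis (t + a)))" for t
    proof -
      have "\<bar>f t\<bar> = y / 2 * cmod (poly P (cis (t + a)))"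
        unfolding fR cR[symmetric] cmod_eq_Re[OF ImR] using y by (simp add: abs_mult)
      then show ?thesis using y by (auto simp: field_simps)
    qed
    then show ?thesis by auto
  qed
  then have "mu f = measure lborel {t \<in> {0..<2*pi}. 2/y \<le> cmod (poly P (cis (t + a)))}"
    unfolding mu_def by simp
  also have "\<dots> = measure lborel {t \<in> {0..<2*pi}. 2/y \<le> cmod (poly P (cis t))}"
  proof (rule periodic_shift_measure)
    fix x and k :: int
    have c: "cis (x + 2 * pi * of_int k) = cis x" by (simp add: cis_mult[symmetric])
    show "(2/y \<le> cmod (poly P (cis (x + 2 * pi * of_int k)))) = (2/y \<le> cmod (poly P (cis x)))" by (simp only: c)
  next
    have "closed {x. 2/y \<le> cmod (poly P (cis x))}"
      by (intro closed_Collect_le continuous_intros)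
    then show "{x. 2/y \<le> cmod (poly P (cis x))} \<in> sets borel" by simp
  qed
  finally show ?thesis using fF by auto
qed


lemma closed_level_meas:
  assumes "continuous_on UNIV (h :: real \<Rightarrow> real)"
  shows "{t \<in> {a..<b}. c \<le> h t} \<in> sets lborel"
proof -
  have "closed {t. c \<le> h t}" using assms by (intro closed_Collect_le continuous_intros) auto
  then have "{t. c \<le> h t} \<in> sets borel" by simp
  moreover have "{t \<in> {a..<b}. c \<le> h t} = {a..<b} \<inter> {t. c \<le> h t}" by auto
  ultimately show ?thesis by simp
qed

theorem corollary1:
  fixes n :: nat and y :: real
  assumes "n \<ge> 1" and "y > 1"
  shows "sigma n y = delta (2 * n) (2 / y)"
proof -
  have n: "n \<ge> 1" and y: "y > 0" using assms by auto
  define D where "D = (\<lambda>p. measure lborel {t \<in> {0..<2*pi}. cmod (poly p (cis t)) \<ge> 2/y}) ` unimodular_monic (2*n)"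
  define S where "S = mu ` F_y n y"
  have sD: "sigma n y = Inf S" unfolding sigma_def S_def ..
  have dD: "delta (2*n) (2/y) = Inf D" unfolding delta_def D_def ..
  have bS: "bdd_below S" unfolding S_def mu_def by (intro bdd_belowI[of _ 0]) auto
  have bD: "bdd_below D" unfolding D_def by (intro bdd_belowI[of _ 0]) auto
  have neS: "S \<noteq> {}"
  proof -
    have "(\<lambda>t. y * cos (real n * t) + 0) \<in> F_y n y"
      unfolding F_y_def using trig_poly_zero by blast
    then show ?thesis unfolding S_def by blast
  qed
  have neD: "D \<noteq> {}"
  proof -
    have "[:-1, 1:] ^ (2*n) \<in> unimodular_monic (2*n)"
    proof -
      have l1: "lead_coeff ([:-1, 1:] :: complex poly) = 1" by simp
      have l: "lead_coeff ([:-1, 1:] ^ (2*n) :: complex poly) = 1"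
        using lead_coeff_power[of "[:-1, 1:] :: complex poly" "2*n"] l1 by (metis power_one)
      have d: "degree ([:-1, 1:] ^ (2*n) :: complex poly) = 2*n" by (simp add: degree_power_eq)
      have r: "\<forall>z. poly ([:-1, 1:] ^ (2*n) :: complex poly) z = 0 \<longrightarrow> cmod z = 1" by auto
      show ?thesis unfolding unimodular_monic_def mem_Collect_eq using l d r by blast
    qed
    then show ?thesis unfolding D_def by blast
  qed
  have le1: "Inf S \<le> Inf D"
  proof (rule cInf_mono[OF neD bS])
    fix d assume "d \<in> D"
    then obtain P where P: "P \<in> unimodular_monic (2*n)"
      and d: "d = measure lborel {t \<in> {0..<2*pi}. cmod (poly P (cis t)) \<ge> 2/y}"
      unfolding D_def by blast
    obtain f where "f \<in> F_y n y" "mu f = d" using from_poly[OF n y P] d by blast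
    then show "\<exists>a\<in>S. a \<le> d" unfolding S_def by force
  qed
  have le2: "Inf D \<le> Inf S"
  proof (rule cInf_mono[OF neS bD])
    fix s assume "s \<in> S"
    then obtain f where fF: "f \<in> F_y n y" and s: "s = mu f" unfolding S_def by blast
    obtain g where g: "trig_poly (n - 1) g" and fd: "f = (\<lambda>t. y * cos (real n * t) + g t)"
      using fF unfolding F_y_def by blast
    obtain Q :: "complex poly" where dQ: "degree Q = 2*n" and lQ: "lead_coeff Q = 1" and Q0: "poly Q 0 = 1"
      and Qf: "\<forall>t. cmod (poly Q (cis t)) = (2/y) * \<bar>y * cos (real n * t) + g t\<bar>"
      using poly_of_trig[OF n y g] by blast
    obtain P where P: "P \<in> unimodular_monic (2*n)"
      and PQ: "\<forall>w. cmod w = 1 \<longrightarrow> cmod (poly P w) \<le> cmod (poly Q w)"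
      using project_roots[of Q] lQ Q0 dQ by auto
    define A where "A = {t \<in> {0..<2*pi}. 2/y \<le> cmod (poly P (cis t))}"
    define B where "B = {t \<in> {0..<2*pi}. 1 \<le> \<bar>f t\<bar>}"
    have AB: "A \<subseteq> B"
    proof
      fix t assume "t \<in> A"
      then have t: "t \<in> {0..<2*pi}" and h: "2/y \<le> cmod (poly P (cis t))" unfolding A_def by auto
      have "2/y \<le> (2/y) * \<bar>f t\<bar>" using h PQ Qf unfolding fd by (metis norm_cis order.trans)
      then have "1 \<le> \<bar>f t\<bar>" using y by (simp add: field_simps)
      then show "t \<in> B" using t unfolding B_def by simp
    qed
    have Am: "A \<in> sets lborel" unfolding A_def
      by (rule closed_level_meas) (intro continuous_intros)
    have contf: "continuous_on UNIV f"
      unfolding fd using trig_poly_cont[OF g] by (intro continuous_intros) auto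
    have Bm: "B \<in> fmeasurable lborel" unfolding B_def fmeasurable_def
      using closed_level_meas[of "\<lambda>t. \<bar>f t\<bar>"] contf fin_Ico[of 0 "2*pi" "\<lambda>t. 1 \<le> \<bar>f t\<bar>"]
      by (auto intro: continuous_intros simp: less_top)
    have "measure lborel A \<le> measure lborel B" by (rule measure_mono_fmeasurable[OF AB Am Bm])
    moreover have "measure lborel A \<in> D" unfolding D_def A_def using P by auto
    moreover have "measure lborel B = s" unfolding B_def s mu_def by simp
    ultimately show "\<exists>a\<in>D. a \<le> s" by blast
  qed
  show ?thesis unfolding sD dD using le1 le2 by simp
qed

end
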